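(* Let $B=(b_{st})$ be an $n\times n$ symmetric matrix over the complex numbers. For $1\le i,j\le n$ let $B_{[ij]}$ be the matrix obtained from $B$ by replacing the entries in positions $(i,j)$ and $(j,i)$ by $0$ (all other entries unchanged), and for $i<j$ let $B^{i,j}_{i,j}$ be the submatrix of $B$ obtained by deleting rows $i,j$ and columns $i,j$. Let $2m$ be the number of nonzero off-diagonal entries of $B$ and let $c$ be the number of zero entries on the diagonal of $B$. Then $$(m-c)\,d_2(B)=\sum_{(i,j)\in I_1} d_2(B_{[ij]})+\sum_{(i,j)\in I_2} b_{ij}^2\, d_2(B^{i,j}_{i,j}),$$ where $I_1=\{(i,j): b_{ij}\ne 0,\ 1\le i\le j\le n\}$ and $I_2=\{(i,j): b_{ij}\ne 0,\ 1\le i<j\le n\}$.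
   Context: For an $n\times n$ matrix $M=(m_{ij})$ ($n\ge 2$), the second immanant is $d_2(M)=\sum_{\sigma\in S_n}\chi_2(\sigma)\prod_{s=1}^n m_{s\sigma(s)}$, where $\chi_2$ is the irreducible character of $S_n$ corresponding to the partition $(2,1^{n-2})$. It satisfies $d_2(X)=\sum_{i=1}^k x_{ii}\det(X(i))-\det(X)$ for a $k\times k$ matrix $X$, where $X(i)$ is $X$ with row and column $i$ deleted; for matrices of order less than $2$, $d_2$ is understood via this identity, with the determinant of the empty matrix equal to $1$. *)

theory Defs
  imports "Jordan_Normal_Form.Determinant"
begin

text \<open>The character of S_k for the partition (2,1^(k-2)) is
  chi_2(p) = sign(p) * (number of fixed points of p - 1).
  Second immanant of a square matrix (indices 0..<k).\<close>
definition chi2 :: "nat \<Rightarrow> (nat \<Rightarrow> nat) \<Rightarrow> int" where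
  "chi2 k p = sign p * (int (card {i. i < k \<and> p i = i}) - 1)"

definition d2 :: "complex mat \<Rightarrow> complex" where
  "d2 M = (\<Sum> p \<in> {p. p permutes {0 ..< dim_row M}}.
     of_int (chi2 (dim_row M) p) * (\<Prod> i = 0 ..< dim_row M. M $$ (i, p i)))"

definition zero_pair :: "complex mat \<Rightarrow> nat \<Rightarrow> nat \<Rightarrow> complex mat" where
  "zero_pair B i j = mat (dim_row B) (dim_col B)
     (\<lambda>(s,t). if (s = i \<and> t = j) \<or> (s = j \<and> t = i) then 0 else B $$ (s,t))"

definition del2 :: "complex mat \<Rightarrow> nat \<Rightarrow> nat \<Rightarrow> complex mat" where
  "del2 B i j = mat_delete (mat_delete B j j) i i"

end

theory Submission
  imports Defs
begin


definition fidx :: "nat \<Rightarrow> nat \<Rightarrow> nat \<Rightarrow> nat" where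
  "fidx j k a = (if a < j then a else if Suc a < k then Suc a else Suc (Suc a))"

definition hh :: "nat \<Rightarrow> nat \<Rightarrow> nat \<Rightarrow> nat \<Rightarrow> nat" where
  "hh n j k a = (if a < n - 2 then fidx j k a else if a = n - 2 then j else if a = n - 1 then k else a)"

lemma del2_dim: "B \<in> carrier_mat n n \<Longrightarrow> dim_row (del2 B j k) = n - 2"
  unfolding del2_def by auto

lemma del2_index:
  assumes "B \<in> carrier_mat n n" "j < k" "k < n" "a < n - 2" "b < n - 2"
  shows "del2 B j k $$ (a,b) = B $$ (fidx j k a, fidx j k b)"
  using assms unfolding del2_def mat_delete_def fidx_def by auto

lemma hh_inj: assumes "j < k" "k < n" shows "inj_on (hh n j k) {0..<n}"
  using assms unfolding inj_on_def hh_def fidx_def by (auto split: if_splits)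

lemma hh_range: assumes "j < k" "k < n" shows "hh n j k ` {0..<n} \<subseteq> {0..<n}"
  using assms unfolding hh_def fidx_def by (auto split: if_splits)

lemma hh_permutes: assumes "j < k" "k < n" shows "hh n j k permutes {0..<n}"
proof (rule bij_imp_permutes)
  show "bij_betw (hh n j k) {0..<n} {0..<n}"
    unfolding bij_betw_def using hh_inj[OF assms] endo_inj_surj[OF _ hh_range[OF assms]] by auto
  show "x \<notin> {0..<n} \<Longrightarrow> hh n j k x = x" for x unfolding hh_def using assms by auto
qed



lemma conj_fix:
  assumes hp: "g permutes SS"
  shows "card {a\<in>SS. g (rr (inv_into UNIV g a)) = a} = card {b\<in>SS. rr b = b}"
proof -
  have "{a\<in>SS. g (rr (inv_into UNIV g a)) = a} = g ` {b\<in>SS. rr b = b}"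
  proof (intro equalityI subsetI)
    fix a assume a: "a \<in> {a\<in>SS. g (rr (inv_into UNIV g a)) = a}"
    then have "inv_into UNIV g a \<in> SS" using permutes_in_image[OF permutes_inv[OF hp]] by auto
    moreover have "rr (inv_into UNIV g a) = inv_into UNIV g a"
      using a permutes_inverses[OF hp] by (metis (mono_tags, lifting) mem_Collect_eq)
    moreover have "a = g (inv_into UNIV g a)" using permutes_inverses[OF hp] by auto
    ultimately show "a \<in> g ` {b\<in>SS. rr b = b}" by auto
  next
    fix a assume "a \<in> g ` {b\<in>SS. rr b = b}"
    then obtain b where "b \<in> SS" "rr b = b" "a = g b" by auto
    then show "a \<in> {a\<in>SS. g (rr (inv_into UNIV g a)) = a}"
      using permutes_inverses[OF hp] permutes_in_image[OF hp] by auto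
  qed
  moreover have "inj_on g {b\<in>SS. rr b = b}"
    using permutes_inj_on[OF hp] inj_on_subset by blast
  ultimately show ?thesis by (simp add: card_image)
qed



lemma swap_sum:
  assumes B: "B \<in> carrier_mat n n"
    and sym: "\<And>s t. s < n \<Longrightarrow> t < n \<Longrightarrow> B $$ (s,t) = B $$ (t,s)"
    and jk: "j < k" "k < n"
  shows "(\<Sum>p\<in>{p. p permutes {0..<n} \<and> p j = k \<and> p k = j}.
            of_int (chi2 n p) * (\<Prod>i=0..<n. B $$ (i, p i)))
         = - ((B $$ (j,k))^2 * d2 (del2 B j k))"
proof -
  define g where "g = hh n j k"
  define gi where "gi = inv_into UNIV g"
  define T where "T = transpose (n-2) (n - Suc 0)"
  define Q where "Q = {q. q permutes {0..<n-2}}"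
  define PP where "PP = {p. p permutes {0..<n} \<and> p j = k \<and> p k = j}"
  define Phi where "Phi = (\<lambda>q. g \<circ> (T \<circ> q) \<circ> gi)"
  define Psi where "Psi = (\<lambda>p. T \<circ> (gi \<circ> p \<circ> g))"
  have n2: "n \<ge> 2" using jk by auto
  have gp: "g permutes {0..<n}" unfolding g_def using hh_permutes[OF jk] .
  have gip: "gi permutes {0..<n}" unfolding gi_def using permutes_inv[OF gp] .
  have ggi: "g (gi x) = x" "gi (g x) = x" for x
    unfolding gi_def using permutes_inverses[OF gp] by auto
  have g2: "g (n-2) = j" "g (n - Suc 0) = k" using n2 by (auto simp: g_def hh_def)
  have gi2: "gi j = n-2" "gi k = n - Suc 0" using ggi g2 by metis+
  have glow: "a < n-2 \<Longrightarrow> g a = fidx j k a" for a by (simp add: g_def hh_def)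
  have T1: "T (n-2) = n - Suc 0" "T (n - Suc 0) = n-2" "a < n-2 \<Longrightarrow> T a = a" "T (T x) = x" for a x
    using n2 by (auto simp: T_def transpose_def)
  have Tp: "T permutes {0..<n}" unfolding T_def using n2 by (intro permutes_swap_id) auto
  have qfix: "q (n-2) = n-2" "q (n - Suc 0) = n - Suc 0" if "q \<in> Q" for q
    using that permutes_not_in[of q "{0..<n-2}"] unfolding Q_def by auto
  have qlt: "q a < n-2" if "q \<in> Q" "a < n-2" for q a
    using that permutes_in_image[of q "{0..<n-2}"] unfolding Q_def by auto
  have qn: "q permutes {0..<n}" if "q \<in> Q" for q
    using that permutes_subset[of q "{0..<n-2}" "{0..<n}"] unfolding Q_def by auto
  have PhiP: "Phi q permutes {0..<n}" if "q \<in> Q" for q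
    unfolding Phi_def by (intro permutes_compose gip Tp gp qn that)
  have bij: "bij_betw Phi Q PP"
  proof (rule bij_betw_byWitness[where f'=Psi])
    show "\<forall>q\<in>Q. Psi (Phi q) = q" by (auto simp: Psi_def Phi_def ggi T1)
    show "\<forall>p\<in>PP. Phi (Psi p) = p" by (auto simp: Psi_def Phi_def ggi T1)
    show "Phi ` Q \<subseteq> PP"
    proof
      fix p assume "p \<in> Phi ` Q"
      then obtain q where q: "q \<in> Q" "p = Phi q" by auto
      show "p \<in> PP" unfolding PP_def using q PhiP[OF q(1)] qfix[OF q(1)]
        by (auto simp: Phi_def gi2 T1 g2)
    qed
    show "Psi ` PP \<subseteq> Q"
    proof
      fix q assume "q \<in> Psi ` PP"
      then obtain p where p: "p \<in> PP" "q = Psi p" by auto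
      have "q permutes {0..<n}" unfolding p(2) Psi_def
        using p(1) unfolding PP_def by (intro permutes_compose gip Tp gp) auto
      moreover have "q x = x" if "x \<in> {0..<n} - {0..<n-2}" for x
      proof -
        have "x = n-2 \<or> x = n - Suc 0" using that n2 by auto
        moreover from p(1) have pj: "p j = k" "p k = j" unfolding PP_def by auto
        ultimately show ?thesis unfolding p(2) Psi_def
          by (auto simp: g2 gi2 T1 pj)
      qed
      ultimately show "q \<in> Q" unfolding Q_def by (auto intro: permutes_superset)
    qed
  qed
  have pt: "of_int (chi2 n (Phi q)) * (\<Prod>i=0..<n. B $$ (i, Phi q i))
     = - ((B $$ (j,k))^2 * (of_int (chi2 (n-2) q) * (\<Prod>i=0..<n-2. del2 B j k $$ (i, q i))))"
    if q: "q \<in> Q" for q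
  proof -
    have perm: "permutation g" "permutation gi" "permutation T" "permutation q"
      using gp gip Tp qn[OF q] by (auto simp: permutation_permutes)
    have "sign (Phi q) = sign g * (sign T * sign q) * sign gi"
      unfolding Phi_def using perm by (simp add: sign_compose permutation_compose)
    also have "sign gi = sign g" unfolding gi_def using perm(1) by (simp add: sign_inverse)
    also have "sign T = (-1::int)" unfolding T_def using n2 by (simp add: sign_swap_id)
    finally have sg: "sign (Phi q) = - (sign q :: int)"
      by (simp add: algebra_simps)
    have "{a. a < n \<and> Phi q a = a} = {a\<in>{0..<n}. g ((T \<circ> q) (gi a)) = a}"
      by (auto simp: Phi_def)
    then have "card {a. a < n \<and> Phi q a = a} = card {b\<in>{0..<n}. (T \<circ> q) b = b}"
      using conj_fix[OF gp, of "T \<circ> q"] by (simp add: gi_def)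
    also have "{b\<in>{0..<n}. (T \<circ> q) b = b} = {b. b < n-2 \<and> q b = b}"
    proof (intro equalityI subsetI)
      fix b assume b: "b \<in> {b\<in>{0..<n}. (T \<circ> q) b = b}"
      have "b < n-2 \<or> b = n-2 \<or> b = n - Suc 0" using b by auto
      then show "b \<in> {b. b < n-2 \<and> q b = b}"
        using b qfix[OF q] qlt[OF q] T1 n2 by auto
    next
      fix b assume "b \<in> {b. b < n-2 \<and> q b = b}"
      then show "b \<in> {b\<in>{0..<n}. (T \<circ> q) b = b}" using T1 by auto
    qed
    finally have fx: "card {a. a < n \<and> Phi q a = a} = card {b. b < n-2 \<and> q b = b}" .
    have ch: "chi2 n (Phi q) = - chi2 (n-2) q"
      unfolding chi2_def sg fx by simp
    have "(\<Prod>i=0..<n. B $$ (i, Phi q i)) = (\<Prod>b=0..<n. B $$ (g b, Phi q (g b)))"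
      using prod.reindex_bij_betw[OF permutes_imp_bij[OF gp], of "\<lambda>i. B $$ (i, Phi q i)"]
      by simp
    also have "\<dots> = (\<Prod>b=0..<n. B $$ (g b, g (T (q b))))"
      by (simp add: Phi_def ggi)
    also have "\<dots> = B $$ (j,k) * (B $$ (k,j) * (\<Prod>b=0..<n-2. B $$ (g b, g (T (q b)))))"
    proof -
      have e: "{0..<n} = insert (n-2) (insert (n - Suc 0) {0..<n-2})" using n2 by auto
      show ?thesis unfolding e using n2 qfix[OF q] by (simp add: g2 T1)
    qed
    also have "(\<Prod>b=0..<n-2. B $$ (g b, g (T (q b)))) = (\<Prod>i=0..<n-2. del2 B j k $$ (i, q i))"
      by (rule prod.cong) (auto simp: T1 qlt[OF q] glow del2_index[OF B jk])
    also have "B $$ (k,j) = B $$ (j,k)" using sym jk by auto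
    finally show ?thesis unfolding ch by (simp add: power2_eq_square algebra_simps)
  qed
  have "(\<Sum>p\<in>PP. of_int (chi2 n p) * (\<Prod>i=0..<n. B $$ (i, p i)))
     = (\<Sum>q\<in>Q. of_int (chi2 n (Phi q)) * (\<Prod>i=0..<n. B $$ (i, Phi q i)))"
    using sum.reindex_bij_betw[OF bij, of "\<lambda>p. of_int (chi2 n p) * (\<Prod>i=0..<n. B $$ (i, p i))"]
    by simp
  also have "\<dots> = (\<Sum>q\<in>Q. - ((B $$ (j,k))^2 * (of_int (chi2 (n-2) q) * (\<Prod>i=0..<n-2. del2 B j k $$ (i, q i)))))"
    by (rule sum.cong) (auto simp: pt)
  also have "\<dots> = - ((B $$ (j,k))^2 * d2 (del2 B j k))"
    unfolding d2_def del2_dim[OF B] Q_def by (simp add: sum_distrib_left sum_negf)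
  finally show ?thesis unfolding PP_def .
qed



lemma zp_d2:
  assumes B: "B \<in> carrier_mat n n" and ij: "i < n" "j < n"
  shows "d2 (zero_pair B i j) = (\<Sum>p\<in>{p. p permutes {0..<n}}.
     if p i = j \<or> p j = i then 0 else of_int (chi2 n p) * (\<Prod>s=0..<n. B $$ (s, p s)))"
proof -
  have dz: "dim_row (zero_pair B i j) = n" using B by (simp add: zero_pair_def)
  show ?thesis unfolding d2_def dz
  proof (rule sum.cong)
    fix p assume "p \<in> {p. p permutes {0..<n}}"
    then have pp: "p permutes {0..<n}" by simp
    have pn: "s < n \<Longrightarrow> p s < n" for s using permutes_in_image[OF pp] by auto
    show "of_int (chi2 n p) * (\<Prod>s=0..<n. zero_pair B i j $$ (s, p s)) =
      (if p i = j \<or> p j = i then 0 else of_int (chi2 n p) * (\<Prod>s=0..<n. B $$ (s, p s)))"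
    proof (cases "p i = j \<or> p j = i")
      case True
      then have "\<exists>s\<in>{0..<n}. zero_pair B i j $$ (s, p s) = 0"
      proof
        assume "p i = j" then show ?thesis using ij B by (intro bexI[of _ i]) (auto simp: zero_pair_def)
      next
        assume "p j = i" then show ?thesis using ij B by (intro bexI[of _ j]) (auto simp: zero_pair_def)
      qed
      then show ?thesis using True by (simp add: prod_zero)
    next
      case False
      have "(\<Prod>s=0..<n. zero_pair B i j $$ (s, p s)) = (\<Prod>s=0..<n. B $$ (s, p s))"
        by (rule prod.cong) (use B False pn in \<open>auto simp: zero_pair_def\<close>)
      then show ?thesis using False by simp
    qed
  qed simp
qed

lemma count_U:
  assumes pp: "p permutes {0..<n}"
  shows "card {(i,j). i \<le> j \<and> j < n \<and> (p i = j \<or> p j = i)}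
       + card {(j,k). j < k \<and> k < n \<and> p j = k \<and> p k = j} = n"
proof -
  have pn: "x < n \<Longrightarrow> p x < n" for x using permutes_in_image[OF pp] by auto
  define S where "S = {x. x < n \<and> (x \<le> p x \<or> p (p x) \<noteq> x)}"
  define R where "R = {x. x < n \<and> p x < x \<and> p (p x) = x}"
  define f where "f = (\<lambda>x. (min x (p x), max x (p x)))"
  have injS: "inj_on f S"
  proof (rule inj_onI)
    fix x y assume x: "x \<in> S" and y: "y \<in> S" and e: "f x = f y"
    show "x = y"
    proof (rule ccontr)
      assume ne: "x \<noteq> y"
      have "x = p y \<and> y = p x" using e ne unfolding f_def
        by (cases "x \<le> p x"; cases "y \<le> p y") (auto simp: min_def max_def)
      then have h1: "x = p y" and h2: "y = p x" by blast+
      have pp1: "p (p x) = x" using h1 h2 by metis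
      have pp2: "p (p y) = y" using h1 h2 by metis
      have "x \<le> p x" using x pp1 unfolding S_def by auto
      moreover have "y \<le> p y" using y pp2 unfolding S_def by auto
      ultimately show False using h1 h2 ne by linarith
    qed
  qed
  have imS: "f ` S = {(i,j). i \<le> j \<and> j < n \<and> (p i = j \<or> p j = i)}"
  proof (intro equalityI subsetI)
    fix z assume "z \<in> f ` S"
    then obtain x where x: "x \<in> S" "z = f x" by auto
    then show "z \<in> {(i,j). i \<le> j \<and> j < n \<and> (p i = j \<or> p j = i)}"
      using pn unfolding S_def f_def by (auto simp: min_def max_def)
  next
    fix z assume z: "z \<in> {(i,j). i \<le> j \<and> j < n \<and> (p i = j \<or> p j = i)}"
    then obtain i j where ij: "z = (i,j)" "i \<le> j" "j < n" "p i = j \<or> p j = i" by auto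
    show "z \<in> f ` S"
    proof (cases "p i = j")
      case True
      then have "i \<in> S" "f i = z" using ij unfolding S_def f_def by auto
      then show ?thesis by blast
    next
      case False
      then have pj: "p j = i" using ij by auto
      have "j \<in> S" using ij pj False unfolding S_def by auto
      moreover have "f j = z" using ij pj unfolding f_def by auto
      ultimately show ?thesis by blast
    qed
  qed
  have injR: "inj_on (\<lambda>x. (p x, x)) R" by (rule inj_onI) auto
  have imR: "(\<lambda>x. (p x, x)) ` R = {(j,k). j < k \<and> k < n \<and> p j = k \<and> p k = j}"
  proof (intro equalityI subsetI)
    fix z assume "z \<in> (\<lambda>x. (p x, x)) ` R"
    then show "z \<in> {(j,k). j < k \<and> k < n \<and> p j = k \<and> p k = j}" unfolding R_def by auto
  next
    fix z assume "z \<in> {(j,k). j < k \<and> k < n \<and> p j = k \<and> p k = j}"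
    then obtain j k where "z = (j,k)" "j < k" "k < n" "p j = k" "p k = j" by auto
    then have "k \<in> R" "z = (p k, k)" unfolding R_def by auto
    then show "z \<in> (\<lambda>x. (p x, x)) ` R" by blast
  qed
  have "card S + card R = card (S \<union> R)"
    by (rule card_Un_disjoint[symmetric]) (auto simp: S_def R_def)
  also have "S \<union> R = {0..<n}" unfolding S_def R_def by auto
  finally have "card S + card R = n" by simp
  then show ?thesis
    using card_image[OF injS] card_image[OF injR] imS imR by simp
qed



lemma sum_if_count:
  assumes "finite A"
  shows "(\<Sum>x\<in>A. if Q x then 0 else (c::complex)) = of_nat (card {x\<in>A. \<not> Q x}) * c"
proof -
  have "(\<Sum>x\<in>A. if Q x then 0 else c) = (\<Sum>x\<in>A. if \<not> Q x then c else 0)"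
    by (rule sum.cong) auto
  also have "\<dots> = (\<Sum>x\<in>{x\<in>A. \<not> Q x}. c)" by (rule sum.inter_filter[OF assms, symmetric])
  finally show ?thesis by simp
qed

lemma card_I1:
  assumes sym: "\<And>s t. s < n \<Longrightarrow> t < n \<Longrightarrow> B $$ (s,t) = B $$ (t,s)"
    and m: "2 * m = card {(s,t). s < n \<and> t < n \<and> s \<noteq> t \<and> B $$ (s,t) \<noteq> 0}"
    and c: "c = card {i. i < n \<and> B $$ (i,i) = 0}"
  shows "card {(i,j). i \<le> j \<and> j < n \<and> B $$ (i,j) \<noteq> 0} = m + (n - c)"
    and "card {(i,j). i < j \<and> j < n \<and> B $$ (i,j) \<noteq> (0::complex)} = m"
proof -
  define I2 where "I2 = {(i,j). i < j \<and> j < n \<and> B $$ (i,j) \<noteq> (0::complex)}"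
  define Dg where "Dg = {(i,j). i \<le> j \<and> j < n \<and> B $$ (i,j) \<noteq> 0 \<and> i = j}"
  have fin2: "finite I2" by (rule finite_subset[of _ "{0..<n} \<times> {0..<n}"]) (auto simp: I2_def)
  have "{(s,t). s < n \<and> t < n \<and> s \<noteq> t \<and> B $$ (s,t) \<noteq> 0} = I2 \<union> prod.swap ` I2"
  proof (intro equalityI subsetI)
    fix z assume "z \<in> {(s,t). s < n \<and> t < n \<and> s \<noteq> t \<and> B $$ (s,t) \<noteq> 0}"
    then obtain s t where st: "z = (s,t)" "s < n" "t < n" "s \<noteq> t" "B $$ (s,t) \<noteq> 0" by auto
    show "z \<in> I2 \<union> prod.swap ` I2"
    proof (cases "s < t")
      case True then show ?thesis using st by (auto simp: I2_def)
    next
      case False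
      then have "(t,s) \<in> I2" using st sym[of s t] by (auto simp: I2_def)
      then have "z \<in> prod.swap ` I2" by (intro image_eqI[where x="(t,s)"]) (use st in auto)
      then show ?thesis by blast
    qed
  next
    fix z assume "z \<in> I2 \<union> prod.swap ` I2"
    then show "z \<in> {(s,t). s < n \<and> t < n \<and> s \<noteq> t \<and> B $$ (s,t) \<noteq> 0}"
    proof
      assume "z \<in> I2" then show ?thesis by (auto simp: I2_def)
    next
      assume "z \<in> prod.swap ` I2"
      then obtain a b where ab: "z = (b,a)" "(a,b) \<in> I2" by auto
      then have "a < b" "b < n" "B $$ (a,b) \<noteq> 0" by (auto simp: I2_def)
      moreover have "B $$ (b,a) = B $$ (a,b)" using sym[of b a] \<open>a < b\<close> \<open>b < n\<close> by simp
      ultimately show ?thesis using ab by auto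
    qed
  qed
  moreover have "card (I2 \<union> prod.swap ` I2) = card I2 + card (prod.swap ` I2)"
    by (rule card_Un_disjoint) (use fin2 in \<open>auto simp: I2_def\<close>)
  moreover have "card (prod.swap ` I2) = card I2" by (rule card_image) auto
  ultimately have cI2: "card I2 = m" using m by simp
  then show "card {(i,j). i < j \<and> j < n \<and> B $$ (i,j) \<noteq> (0::complex)} = m" unfolding I2_def .
  have "{(i,j). i \<le> j \<and> j < n \<and> B $$ (i,j) \<noteq> 0} = Dg \<union> I2"
    unfolding Dg_def I2_def by auto
  moreover have "card (Dg \<union> I2) = card Dg + card I2"
    by (rule card_Un_disjoint) (use fin2 in \<open>auto simp: I2_def Dg_def intro: finite_subset[of _ "{0..<n} \<times> {0..<n}"]\<close>)
  moreover have "Dg = (\<lambda>i. (i,i)) ` ({0..<n} - {i. i < n \<and> B $$ (i,i) = 0})"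
    unfolding Dg_def by auto
  moreover have "card ((\<lambda>i. (i,i)) ` ({0..<n} - {i. i < n \<and> B $$ (i,i) = 0})) = n - c"
  proof -
    have "card ({0..<n} - {i. i < n \<and> B $$ (i,i) = 0}) = card {0..<n} - card {i. i < n \<and> B $$ (i,i) = 0}"
      by (rule card_Diff_subset) auto
    then show ?thesis by (subst card_image) (auto simp: inj_on_def c)
  qed
  ultimately show "card {(i,j). i \<le> j \<and> j < n \<and> B $$ (i,j) \<noteq> 0} = m + (n - c)"
    using cI2 by simp
qed


lemma sum_if_count2:
  assumes "finite A"
  shows "(\<Sum>x\<in>A. if Q x then (c::complex) else 0) = of_nat (card {x\<in>A. Q x}) * c"
proof -
  have "(\<Sum>x\<in>A. if Q x then c else 0) = (\<Sum>x\<in>{x\<in>A. Q x}. c)"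
    by (rule sum.inter_filter[OF assms, symmetric])
  then show ?thesis by simp
qed

theorem lemma2p4:
  fixes B :: "complex mat" and n m c :: nat
  assumes "B \<in> carrier_mat n n"
    and "\<And>s t. s < n \<Longrightarrow> t < n \<Longrightarrow> B $$ (s,t) = B $$ (t,s)"
    and "2 * m = card {(s,t). s < n \<and> t < n \<and> s \<noteq> t \<and> B $$ (s,t) \<noteq> 0}"
    and "c = card {i. i < n \<and> B $$ (i,i) = 0}"
  shows "(of_nat m - of_nat c) * d2 B =
     (\<Sum>(i,j) \<in> {(i,j). i \<le> j \<and> j < n \<and> B $$ (i,j) \<noteq> 0}. d2 (zero_pair B i j))
   + (\<Sum>(i,j) \<in> {(i,j). i < j \<and> j < n \<and> B $$ (i,j) \<noteq> 0}. (B $$ (i,j))^2 * d2 (del2 B i j))"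
proof -
  note B = assms(1) and sym = assms(2)
  define P where "P = {p. p permutes {0..<n}}"
  define tm where "tm p = (\<Prod>s=0..<n. B $$ (s, p s))" for p
  define w where "w p = (of_int (chi2 n p) :: complex) * tm p" for p
  define I1 where "I1 = {(i,j). i \<le> j \<and> j < n \<and> B $$ (i,j) \<noteq> 0}"
  define I2 where "I2 = {(i,j). i < j \<and> j < n \<and> B $$ (i,j) \<noteq> 0}"
  define D where "D = {(j,k). j < k \<and> (k::nat) < n}"
  define U where "U p = {(i,j). i \<le> j \<and> j < n \<and> (p i = j \<or> p j = i)}" for p :: "nat \<Rightarrow> nat"
  define tt where "tt p = card {(j,k). j < k \<and> k < n \<and> p j = k \<and> p k = j}" for p :: "nat \<Rightarrow> nat"
  define Sum2 where "Sum2 = (\<Sum>(i,j)\<in>I2. (B $$ (i,j))^2 * d2 (del2 B i j))"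
  have finP: "finite P" unfolding P_def by (rule finite_permutations) simp
  have sq: "finite ({0..<n} \<times> {0..<n})" by simp
  have finI1: "finite I1" by (rule finite_subset[OF _ sq]) (auto simp: I1_def)
  have finI2: "finite I2" by (rule finite_subset[OF _ sq]) (auto simp: I2_def)
  have finD: "finite D" by (rule finite_subset[OF _ sq]) (auto simp: D_def)
  have finU: "finite (U p)" for p by (rule finite_subset[OF _ sq]) (auto simp: U_def)
  have cI1: "card I1 = m + (n - c)" unfolding I1_def using card_I1(1)[OF sym assms(3,4)] by blast
  have cn: "c \<le> n"
  proof -
    have "c \<le> card {0..<n}" unfolding assms(4) by (rule card_mono) auto
    then show ?thesis by simp
  qed
  have dB: "d2 B = (\<Sum>p\<in>P. w p)" unfolding d2_def P_def w_def tm_def using B by simp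
  have "(\<Sum>(i,j)\<in>I1. d2 (zero_pair B i j))
      = (\<Sum>x\<in>I1. \<Sum>p\<in>P. if p (fst x) = snd x \<or> p (snd x) = fst x then 0 else w p)"
  proof (rule sum.cong[OF refl])
    fix x assume "x \<in> I1"
    then obtain i j where x: "x = (i,j)" "i \<le> j" "j < n" unfolding I1_def by auto
    show "(case x of (i,j) \<Rightarrow> d2 (zero_pair B i j))
      = (\<Sum>p\<in>P. if p (fst x) = snd x \<or> p (snd x) = fst x then 0 else w p)"
      using x zp_d2[OF B, of i j] unfolding w_def tm_def P_def by simp
  qed
  also have "\<dots> = (\<Sum>p\<in>P. \<Sum>x\<in>I1. if p (fst x) = snd x \<or> p (snd x) = fst x then 0 else w p)"
    by (rule sum.swap)
  also have "\<dots> = (\<Sum>p\<in>P. w p * (of_nat m - of_nat c + of_nat (tt p)))"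
  proof (rule sum.cong[OF refl])
    fix p assume p: "p \<in> P"
    then have pp: "p permutes {0..<n}" by (simp add: P_def)
    have "(\<Sum>x\<in>I1. if p (fst x) = snd x \<or> p (snd x) = fst x then 0 else w p)
        = of_nat (card {x\<in>I1. \<not> (p (fst x) = snd x \<or> p (snd x) = fst x)}) * w p"
      by (rule sum_if_count[OF finI1])
    also have "\<dots> = w p * (of_nat m - of_nat c + of_nat (tt p))"
    proof (cases "tm p = 0")
      case True then show ?thesis by (simp add: w_def)
    next
      case False
      have nz: "B $$ (s, p s) \<noteq> 0" if "s < n" for s
      proof
        assume "B $$ (s, p s) = 0"
        then have "tm p = 0" unfolding tm_def using that by (intro prod_zero) auto
        then show False using False by simp
      qed
      have pn: "s < n \<Longrightarrow> p s < n" for s using permutes_in_image[OF pp] by auto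
      have Usub: "U p \<subseteq> I1"
      proof
        fix x assume "x \<in> U p"
        then obtain i j where x: "x = (i,j)" "i \<le> j" "j < n" "p i = j \<or> p j = i" unfolding U_def by auto
        have "B $$ (i,j) \<noteq> 0"
        proof (cases "p i = j")
          case True then show ?thesis using nz[of i] x by auto
        next
          case False
          then have "p j = i" using x by auto
          then have "B $$ (j,i) \<noteq> 0" using nz[of j] x by auto
          moreover have "B $$ (j,i) = B $$ (i,j)" using sym[of j i] x by auto
          ultimately show ?thesis by simp
        qed
        then show "x \<in> I1" using x by (auto simp: I1_def)
      qed
      have "{x\<in>I1. \<not> (p (fst x) = snd x \<or> p (snd x) = fst x)} = I1 - U p"
        by (auto simp: I1_def U_def)
      then have ce: "card {x\<in>I1. \<not> (p (fst x) = snd x \<or> p (snd x) = fst x)} = card I1 - card (U p)"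
        using card_Diff_subset[OF finU Usub] by simp
      have cu: "card (U p) + tt p = n" unfolding U_def tt_def by (rule count_U[OF pp])
      have cle: "card (U p) \<le> card I1" by (rule card_mono[OF finI1 Usub])
      have e: "card I1 - card (U p) + c = m + tt p" using cI1 cu cle cn by linarith
      have "(of_nat (card I1 - card (U p)) :: complex) + of_nat c = of_nat m + of_nat (tt p)"
        by (metis e of_nat_add)
      then have X: "(of_nat (card I1 - card (U p)) :: complex) = (of_nat m + of_nat (tt p)) - of_nat c"
        by (metis add_diff_cancel_right')
      show ?thesis unfolding ce X by (simp add: algebra_simps)
    qed
    finally show "(\<Sum>x\<in>I1. if p (fst x) = snd x \<or> p (snd x) = fst x then 0 else w p)
        = w p * (of_nat m - of_nat c + of_nat (tt p))" .
  qed
  also have "\<dots> = (of_nat m - of_nat c) * (\<Sum>p\<in>P. w p) + (\<Sum>p\<in>P. w p * of_nat (tt p))"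
  proof -
    have "(\<Sum>p\<in>P. w p * (of_nat m - of_nat c + of_nat (tt p)))
        = (\<Sum>p\<in>P. (of_nat m - of_nat c) * w p + w p * of_nat (tt p))"
      by (rule sum.cong[OF refl]) (simp only: distrib_left mult.commute)
    then show ?thesis by (simp only: sum.distrib sum_distrib_left)
  qed
  also have "(\<Sum>p\<in>P. w p * of_nat (tt p)) = - Sum2"
  proof -
    have "(\<Sum>p\<in>P. w p * of_nat (tt p))
        = (\<Sum>p\<in>P. \<Sum>x\<in>D. if p (fst x) = snd x \<and> p (snd x) = fst x then w p else 0)"
    proof (rule sum.cong[OF refl])
      fix p
      have "{(j,k). j < k \<and> k < n \<and> p j = k \<and> p k = j} = {x\<in>D. p (fst x) = snd x \<and> p (snd x) = fst x}"
        by (auto simp: D_def)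
      then show "w p * of_nat (tt p) = (\<Sum>x\<in>D. if p (fst x) = snd x \<and> p (snd x) = fst x then w p else 0)"
        unfolding sum_if_count2[OF finD] tt_def by simp
    qed
    also have "\<dots> = (\<Sum>x\<in>D. \<Sum>p\<in>P. if p (fst x) = snd x \<and> p (snd x) = fst x then w p else 0)"
      by (rule sum.swap)
    also have "\<dots> = (\<Sum>x\<in>D. \<Sum>p\<in>{p\<in>P. p (fst x) = snd x \<and> p (snd x) = fst x}. w p)"
      by (rule sum.cong[OF refl], rule sum.inter_filter[OF finP, symmetric])
    also have "\<dots> = (\<Sum>x\<in>D. - ((B $$ (fst x, snd x))^2 * d2 (del2 B (fst x) (snd x))))"
    proof (rule sum.cong[OF refl])
      fix x assume "x \<in> D"
      then obtain j k where x: "x = (j,k)" "j < k" "k < n" unfolding D_def by auto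
      have "{p\<in>P. p (fst x) = snd x \<and> p (snd x) = fst x} = {p. p permutes {0..<n} \<and> p j = k \<and> p k = j}"
        using x by (auto simp: P_def)
      then show "(\<Sum>p\<in>{p\<in>P. p (fst x) = snd x \<and> p (snd x) = fst x}. w p)
          = - ((B $$ (fst x, snd x))^2 * d2 (del2 B (fst x) (snd x)))"
        using swap_sum[OF B sym x(2,3)] x by (simp add: w_def tm_def)
    qed
    also have "\<dots> = (\<Sum>x\<in>I2. - ((B $$ (fst x, snd x))^2 * d2 (del2 B (fst x) (snd x))))"
      by (rule sum.mono_neutral_right[OF finD]) (auto simp: D_def I2_def)
    also have "\<dots> = - Sum2" unfolding Sum2_def by (simp add: sum_negf split_beta)
    finally show ?thesis .
  qed
  finally have S1: "(\<Sum>(i,j)\<in>I1. d2 (zero_pair B i j)) = (of_nat m - of_nat c) * d2 B - Sum2"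
    unfolding dB by simp
  show ?thesis unfolding I1_def[symmetric] I2_def[symmetric] Sum2_def[symmetric] S1 by simp
qed

end
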